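(* Let $(M,d,0_M)$ be an unbounded pointed metric space, $(N,d,0_N)$ any pointed metric space and $f\colon M\to N$ any map. Suppose $f$ satisfies: $(P_3)$ for every sequence $(x_n,y_n)_n$ in $M\times M$ with $x_n\ne y_n$ and $\lim_n d(x_n,0_M)=\lim_n d(y_n,0_M)=\infty$, either $(f(x_n),f(y_n))_n$ has an accumulation point in $N\times N$, or $\liminf_{n\to\infty}\frac{d(f(x_n),f(y_n))}{d(x_n,y_n)}=0$. Then $f$ is radially flat, i.e. $$\lim_{d(x,0_M)\to\infty}\frac{d(f(x),0_N)}{d(x,0_M)}=0.$$ *)

theory Defs
  imports "HOL-Analysis.Analysis"
begin

definition seq_accumulation_point :: "(nat \<Rightarrow> 'a::topological_space) \<Rightarrow> 'a \<Rightarrow> bool" where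
  "seq_accumulation_point s p \<longleftrightarrow>
     (\<forall>U. open U \<and> p \<in> U \<longrightarrow> (\<exists>\<^sub>F n in sequentially. s n \<in> U))"

definition at_far :: "'a::metric_space \<Rightarrow> 'a filter" where
  "at_far z = filtercomap (\<lambda>x. dist x z) at_top"

definition P3 :: "'a::metric_space \<Rightarrow> ('a \<Rightarrow> 'b::metric_space) \<Rightarrow> bool" where
  "P3 zM f \<longleftrightarrow>
     (\<forall>x y :: nat \<Rightarrow> 'a.
        (\<forall>n. x n \<noteq> y n) \<and>
        filterlim (\<lambda>n. dist (x n) zM) at_top sequentially \<and>
        filterlim (\<lambda>n. dist (y n) zM) at_top sequentially \<longrightarrow>
        (\<exists>p. seq_accumulation_point (\<lambda>n. (f (x n), f (y n))) p) \<or>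
        Liminf sequentially (\<lambda>n. ereal (dist (f (x n)) (f (y n)) / dist (x n) (y n))) = 0)"

definition radially_flat :: "'a::metric_space \<Rightarrow> 'b::metric_space \<Rightarrow> ('a \<Rightarrow> 'b) \<Rightarrow> bool" where
  "radially_flat zM zN f \<longleftrightarrow>
     ((\<lambda>x. dist (f x) zN / dist x zM) \<longlongrightarrow> 0) (at_far zM)"

end

theory Submission
  imports Defs
begin

theorem lemma2p4:
  fixes zM :: "'a::metric_space" and zN :: "'b::metric_space" and f :: "'a \<Rightarrow> 'b"
  assumes "\<not> bounded (UNIV :: 'a set)"
    and "P3 zM f"
  shows "radially_flat zM zN f"
proof (rule ccontr)
  assume nr: "\<not> radially_flat zM zN f"
  then obtain e :: real where e: "e > 0"
    and ne: "\<not> eventually (\<lambda>x. dist (dist (f x) zN / dist x zM) 0 < e) (at_far zM)"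
    unfolding radially_flat_def tendsto_iff by blast
  have ex: "\<exists>x. dist x zM \<ge> R \<and> dist (f x) zN \<ge> e * dist x zM" if "R > 0" for R
  proof (rule ccontr)
    assume "\<not> ?thesis"
    hence h: "\<forall>x. dist x zM \<ge> R \<longrightarrow> dist (f x) zN < e * dist x zM" by force
    have "eventually (\<lambda>x. dist (dist (f x) zN / dist x zM) 0 < e) (at_far zM)"
      unfolding at_far_def eventually_filtercomap
    proof (intro exI conjI allI impI)
      show "eventually (\<lambda>t. t \<ge> R) at_top" by simp
      fix x assume "dist x zM \<ge> R"
      with h that have "dist (f x) zN < e * dist x zM" "dist x zM > 0" by auto
      thus "dist (dist (f x) zN / dist x zM) 0 < e"
        by (simp add: divide_less_eq)
    qed
    with ne show False by blast
  qed
  define c where "c R = (SOME x. dist x zM \<ge> R \<and> dist (f x) zN \<ge> e * dist x zM)" for R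
  have c: "dist (c R) zM \<ge> R \<and> dist (f (c R)) zN \<ge> e * dist (c R) zM" if "R > 0" for R
    unfolding c_def using someI_ex[OF ex[OF that]] .
  define s where "s = rec_nat (c 1) (\<lambda>_ z. c (max (dist z zM + 1) ((2 * dist (f z) zN + 1) / e)))"
  have s0: "s 0 = c 1" by (simp add: s_def)
  have sS: "s (Suc n) = c (max (dist (s n) zM + 1) ((2 * dist (f (s n)) zN + 1) / e))" for n
    by (simp add: s_def)
  have P1: "dist (f (s n)) zN \<ge> e * dist (s n) zM" for n
  proof (cases n)
    case 0 then show ?thesis using c[of 1] s0 by simp
  next
    case (Suc m)
    have "max (dist (s m) zM + 1) ((2 * dist (f (s m)) zN + 1) / e) > 0"
      by (simp add: less_max_iff_disj add_nonneg_pos)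
    then show ?thesis using c Suc sS by metis
  qed
  have P2: "dist (s (Suc n)) zM \<ge> dist (s n) zM + 1
      \<and> dist (s (Suc n)) zM \<ge> (2 * dist (f (s n)) zN + 1) / e" for n
  proof -
    have pos: "max (dist (s n) zM + 1) ((2 * dist (f (s n)) zN + 1) / e) > 0"
      by (simp add: less_max_iff_disj add_nonneg_pos)
    from c[OF pos] sS[of n] show ?thesis by auto
  qed
  have P3f: "dist (f (s (Suc n))) zN \<ge> 2 * dist (f (s n)) zN + 1" for n
  proof -
    have "e * dist (s (Suc n)) zM \<ge> e * ((2 * dist (f (s n)) zN + 1) / e)"
      using P2[of n] e by (intro mult_left_mono) auto
    also have "e * ((2 * dist (f (s n)) zN + 1) / e) = 2 * dist (f (s n)) zN + 1" using e by simp
    finally show ?thesis using P1[of "Suc n"] by linarith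
  qed
  have Ls: "dist (s n) zM \<ge> real n" for n
  proof (induction n)
    case (Suc n) then show ?case using P2[of n] by simp
  qed simp
  have Lf: "dist (f (s n)) zN \<ge> real n" for n
  proof (induction n)
    case (Suc n) then show ?case using P3f[of n] by simp
  qed simp
  have s1: "dist (s n) zM \<ge> 1" for n
  proof (cases n)
    case 0 then show ?thesis using c[of 1] s0 by simp
  next
    case (Suc m) then show ?thesis using P2[of m] zero_le_dist[of "s m" zM] by (simp only:) linarith
  qed
  define x where "x n = s (Suc n)" for n
  define y where "y n = s n" for n
  have neq: "\<forall>n. x n \<noteq> y n"
    using P2 unfolding x_def y_def by (metis add_le_same_cancel1 not_one_le_zero)
  have limy: "filterlim (\<lambda>n. dist (y n) zM) at_top sequentially"
    unfolding y_def by (rule filterlim_at_top_mono[OF filterlim_real_sequentially]) (use Ls in auto)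
  have limx: "filterlim (\<lambda>n. dist (x n) zM) at_top sequentially"
    unfolding x_def
    by (rule filterlim_at_top_mono[OF filterlim_real_sequentially]) (use Ls in \<open>auto intro!: always_eventually order_trans[OF _ Ls[of "Suc _"]]\<close>)
  have noacc: "\<not> seq_accumulation_point (\<lambda>n. (f (x n), f (y n))) p" for p
  proof
    assume "seq_accumulation_point (\<lambda>n. (f (x n), f (y n))) p"
    hence fr: "\<exists>\<^sub>F n in sequentially. (f (x n), f (y n)) \<in> ball p 1"
    proof -
      have "open (ball p 1) \<and> p \<in> ball p 1" by simp
      moreover have "\<forall>U. open U \<and> p \<in> U \<longrightarrow> (\<exists>\<^sub>F n in sequentially. (f (x n), f (y n)) \<in> U)"
        using \<open>seq_accumulation_point _ p\<close> unfolding seq_accumulation_point_def .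
      ultimately show ?thesis using spec[of _ "ball p 1"] mp by fast
    qed
    have ev: "\<forall>\<^sub>F n in sequentially. (f (x n), f (y n)) \<notin> ball p 1"
    proof -
      obtain N :: nat where N: "real N > dist (fst p) zN + 1" using reals_Archimedean2 by blast
      show ?thesis unfolding eventually_sequentially
      proof (intro exI allI impI)
        fix n assume "n \<ge> N"
        hence "dist (f (x n)) zN > dist (fst p) zN + 1"
          using Lf[of "Suc n"] N unfolding x_def by simp
        hence "dist (f (x n)) (fst p) > 1"
          using dist_triangle[of "f (x n)" zN "fst p"] by (simp add: dist_commute)
        moreover have "dist (f (x n)) (fst p) \<le> dist (f (x n), f (y n)) p"
          using dist_fst_le[of "(f (x n), f (y n))" p] by simp
        ultimately show "(f (x n), f (y n)) \<notin> ball p 1" by (simp add: dist_commute)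
      qed
    qed
    from fr ev show False unfolding frequently_def by simp
  qed
  have ratio: "ereal (e / 4) \<le> ereal (dist (f (x n)) (f (y n)) / dist (x n) (y n))" for n
  proof -
    let ?a = "dist (x n) zM"
    have fxy: "dist (f (x n)) (f (y n)) \<ge> dist (f (x n)) zN / 2"
      using P3f[of n] dist_triangle[of "f (x n)" zN "f (y n)"] unfolding x_def y_def
      by (simp add: dist_commute)
    have fx: "dist (f (x n)) zN \<ge> e * ?a" using P1 unfolding x_def by simp
    have a1: "?a \<ge> 1" using s1 unfolding x_def by simp
    have dxy: "dist (x n) (y n) \<le> 2 * ?a"
      using dist_triangle2[of "x n" "y n" zM] P2[of n] unfolding x_def y_def
      by linarith
    have dpos: "dist (x n) (y n) > 0" using neq by simp
    have an: "?a \<noteq> 0" using a1 by linarith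
    have "e / 4 = (e * ?a / 2) / (2 * ?a)" using an by (simp add: field_simps)
    also have "\<dots> \<le> (e * ?a / 2) / dist (x n) (y n)"
      using dxy dpos e a1 by (intro divide_left_mono) (auto intro!: mult_pos_pos)
    also have "\<dots> \<le> dist (f (x n)) (f (y n)) / dist (x n) (y n)"
      using fx fxy dpos by (intro divide_right_mono) auto
    finally show ?thesis by simp
  qed
  have "ereal (e / 4) \<le> Liminf sequentially (\<lambda>n. ereal (dist (f (x n)) (f (y n)) / dist (x n) (y n)))"
    by (rule Liminf_bounded) (use ratio in auto)
  hence "Liminf sequentially (\<lambda>n. ereal (dist (f (x n)) (f (y n)) / dist (x n) (y n))) \<noteq> 0"
    using e by (metis ereal_less_eq(3) linorder_not_le zero_ereal_def divide_pos_pos zero_less_numeral)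
  with noacc neq limx limy assms(2) show False unfolding P3_def by blast
qed

end
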